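(* Let $\mathcal{H}_c=\mathcal{H}_{c'}=\ell^2(\mathbb{Z})$ with orthonormal bases $(|\tau\rangle_c)_{\tau\in\mathbb{Z}}$, $(|\tau\rangle_{c'})_{\tau\in\mathbb{Z}}$ and bilateral shifts $U_c|\tau\rangle_c=|\tau+1\rangle_c$, $U_{c'}|\tau\rangle_{c'}=|\tau+1\rangle_{c'}$. Let $\mathcal{H}_r$, $\mathcal{H}_{r'}$ be separable Hilbert spaces with $\dim\mathcal{H}_r=\dim\mathcal{H}_{r'}$ and unitaries $U_r$, $U_{r'}$ on them; set $U=U_c\otimes U_r$, $U'=U_{c'}\otimes U_{r'}$. For any unit vectors $|\psi(0)\rangle_r\in\mathcal{H}_r$, $|\psi'(0)\rangle_{r'}\in\mathcal{H}_{r'}$, with $|\Psi(\tau)\rangle=U^\tau|0\rangle_c|\psi(0)\rangle_r=|\tau\rangle_c U_r^\tau|\psi(0)\rangle_r$ and $|\Psi'(\tau)\rangle=U'^\tau|0\rangle_{c'}|\psi'(0)\rangle_{r'}$, there exists a unitary operator $S:\mathcal{H}_c\otimes\mathcal{H}_r\to\mathcal{H}_{c'}\otimes\mathcal{H}_{r'}$ such that $|\Psi'(\tau)\rangle=S|\Psi(\tau)\rangle$ for all $\tau\in\mathbb{Z}$ and $U'=SUS^{-1}$.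
   Context: This is the infinite discrete-time Page-Wootters setting: a clock with time values $\tau\in\mathbb{Z}$ whose one-step evolution is the bilateral shift, and a "rest of the world" with one-step unitary evolution $U_r$. *)

theory Defs
  imports "HOL-Analysis.Analysis"
begin

text \<open>Separable complex Hilbert spaces are modelled as l2(I) over a countable
index type I (an orthonormal basis).  Vectors are functions I => complex.\<close>

definition l2 :: "('i \<Rightarrow> complex) set" where
  "l2 = {f. (\<lambda>x. (cmod (f x))^2) summable_on UNIV}"

definition l2_inner :: "('i \<Rightarrow> complex) \<Rightarrow> ('i \<Rightarrow> complex) \<Rightarrow> complex" where
  "l2_inner f g = infsum (\<lambda>x. cnj (f x) * g x) UNIV"

definition l2_norm :: "('i \<Rightarrow> complex) \<Rightarrow> real" where
  "l2_norm f = sqrt (infsum (\<lambda>x. (cmod (f x))^2) UNIV)"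

text \<open>Unitary operator l2(I) -> l2(J): linear, bijective onto l2(J), inner-product preserving.
Values outside l2 are irrelevant.\<close>
definition unitary_l2 :: "(('i \<Rightarrow> complex) \<Rightarrow> ('j \<Rightarrow> complex)) \<Rightarrow> bool" where
  "unitary_l2 T \<longleftrightarrow>
     bij_betw T l2 l2 \<and>
     (\<forall>f\<in>l2. \<forall>g\<in>l2. \<forall>c::complex. T (\<lambda>x. f x + c * g x) = (\<lambda>y. T f y + c * T g y)) \<and>
     (\<forall>f\<in>l2. \<forall>g\<in>l2. l2_inner (T f) (T g) = l2_inner f g)"

definition upow :: "(('i \<Rightarrow> complex) \<Rightarrow> ('i \<Rightarrow> complex)) \<Rightarrow> int \<Rightarrow> ('i \<Rightarrow> complex) \<Rightarrow> ('i \<Rightarrow> complex)" where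
  "upow T k = (if 0 \<le> k then T ^^ nat k else (inv_into l2 T) ^^ nat (- k))"

text \<open>l2(Z) tensor l2(I) = l2(Z x I).  The clock basis vector |tau> tensor psi: \<close>
definition clock_ket :: "int \<Rightarrow> ('i \<Rightarrow> complex) \<Rightarrow> (int \<times> 'i \<Rightarrow> complex)" where
  "clock_ket t psi = (\<lambda>(s, a). if s = t then psi a else 0)"

text \<open>U_c tensor U_r where U_c is the bilateral shift |tau> -> |tau+1>:
  (U F)(tau, .) = U_r (F(tau - 1, .)).\<close>
definition shift_tensor :: "(('i \<Rightarrow> complex) \<Rightarrow> ('i \<Rightarrow> complex)) \<Rightarrow> (int \<times> 'i \<Rightarrow> complex) \<Rightarrow> (int \<times> 'i \<Rightarrow> complex)" where
  "shift_tensor Ur F = (\<lambda>(t, a). Ur (\<lambda>b. F (t - 1, b)) a)"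

end

theory Submission
  imports Defs
begin

lemma l2_iff: "f \<in> l2 \<longleftrightarrow> (\<lambda>x. (cmod (f x))^2) summable_on UNIV"
  by (simp add: l2_def)

lemma l2_inner_summable:
  assumes "f \<in> l2" "g \<in> l2"
  shows "(\<lambda>x. cnj (f x) * g x) summable_on UNIV"
proof -
  have s: "(\<lambda>x. (cmod (f x))^2 + (cmod (g x))^2) summable_on UNIV"
    using assms by (intro summable_on_add) (auto simp: l2_iff)
  have "(\<lambda>x. norm (cnj (f x) * g x)) summable_on UNIV"
  proof (rule summable_on_comparison_test[OF s])
    fix x
    have "2 * (cmod (f x) * cmod (g x)) \<le> (cmod (f x))^2 + (cmod (g x))^2"
      using sum_squares_bound[of "cmod (f x)" "cmod (g x)"] by (simp add: mult.assoc)
    moreover have "0 \<le> cmod (f x) * cmod (g x)" by simp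
    moreover have "norm (cnj (f x) * g x) = cmod (f x) * cmod (g x)" by (simp add: norm_mult)
    ultimately show "norm (cnj (f x) * g x) \<le> (cmod (f x))^2 + (cmod (g x))^2"
      by linarith
  qed auto
  then show ?thesis using summable_on_iff_abs_summable_on_complex by blast
qed

lemma l2_lin:
  assumes "f \<in> l2" "g \<in> l2"
  shows "(\<lambda>x. f x + c * g x) \<in> l2"
proof -
  have s: "(\<lambda>x. 2 * (cmod (f x))^2 + 2 * (cmod c)^2 * (cmod (g x))^2) summable_on UNIV"
    using assms by (intro summable_on_cmult_right summable_on_add) (auto simp: l2_iff)
  show ?thesis unfolding l2_iff
  proof (rule summable_on_comparison_test[OF s])
    fix x
    have sq: "(a + b)^2 \<le> 2 * a^2 + 2 * b^2" for a b :: real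
      using sum_squares_bound[of a b] unfolding power2_sum by linarith
    have "cmod (f x + c * g x) \<le> cmod (f x) + cmod c * cmod (g x)"
      by (metis norm_mult norm_triangle_ineq)
    then have "(cmod (f x + c * g x))^2 \<le> (cmod (f x) + cmod c * cmod (g x))^2"
      by (intro power_mono) auto
    also have "\<dots> \<le> 2 * (cmod (f x))^2 + 2 * (cmod c * cmod (g x))^2"
      by (rule sq)
    finally have "(cmod (f x + c * g x))^2 \<le> 2 * (cmod (f x))^2 + 2 * (cmod c * cmod (g x))^2" .
    then show "(cmod (f x + c * g x))^2 \<le> 2 * (cmod (f x))^2 + 2 * (cmod c)^2 * (cmod (g x))^2"
      by (simp add: power_mult_distrib)
  qed auto
qed

lemma l2_zero: "(\<lambda>x. 0) \<in> l2"
  by (simp add: l2_iff)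

lemma l2_scale: "f \<in> l2 \<Longrightarrow> (\<lambda>x. c * f x) \<in> l2"
  using l2_lin[OF l2_zero, of f c] by simp

lemma l2_add: "f \<in> l2 \<Longrightarrow> g \<in> l2 \<Longrightarrow> (\<lambda>x. f x + g x) \<in> l2"
  using l2_lin[of f g 1] by simp

lemma l2_diff: "f \<in> l2 \<Longrightarrow> g \<in> l2 \<Longrightarrow> (\<lambda>x. f x - g x) \<in> l2"
  using l2_lin[of f g "-1"] by simp

lemma inner_lin_right:
  assumes "f \<in> l2" "g \<in> l2" "h \<in> l2"
  shows "l2_inner f (\<lambda>x. g x + c * h x) = l2_inner f g + c * l2_inner f h"
proof -
  have "l2_inner f (\<lambda>x. g x + c * h x) = infsum (\<lambda>x. cnj (f x) * g x + c * (cnj (f x) * h x)) UNIV"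
    unfolding l2_inner_def by (simp add: algebra_simps)
  also have "\<dots> = l2_inner f g + c * l2_inner f h"
    unfolding l2_inner_def
    by (subst infsum_add) (auto intro!: summable_on_cmult_right l2_inner_summable assms simp: infsum_cmult_right')
  finally show ?thesis .
qed

lemma inner_cnj: "l2_inner g f = cnj (l2_inner f g)"
  unfolding l2_inner_def infsum_cnj[symmetric] by (simp add: mult.commute)

lemma inner_lin_left:
  assumes "f \<in> l2" "g \<in> l2" "h \<in> l2"
  shows "l2_inner (\<lambda>x. g x + c * h x) f = l2_inner g f + cnj c * l2_inner h f"
  using inner_lin_right[OF assms, of c] by (metis inner_cnj complex_cnj_add complex_cnj_mult complex_cnj_cnj)

lemma inner_self: "f \<in> l2 \<Longrightarrow> l2_inner f f = of_real (infsum (\<lambda>x. (cmod (f x))^2) UNIV)"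
proof -
  assume "f \<in> l2"
  then have "((\<lambda>x. (cmod (f x))^2) has_sum infsum (\<lambda>x. (cmod (f x))^2) UNIV) UNIV"
    by (simp add: l2_iff)
  then have "((\<lambda>x. of_real ((cmod (f x))^2) :: complex) has_sum of_real (infsum (\<lambda>x. (cmod (f x))^2) UNIV)) UNIV"
    by (simp only: has_sum_of_real_iff)
  moreover have "of_real ((cmod (f x))^2) = cnj (f x) * f x" for x
    by (metis complex_norm_square mult.commute of_real_power)
  ultimately show ?thesis unfolding l2_inner_def by (simp add: infsumI)
qed

lemma inner_self_eq0:
  assumes "f \<in> l2" "l2_inner f f = 0" shows "f = (\<lambda>x. 0)"
proof
  fix x
  have "infsum (\<lambda>x. (cmod (f x))^2) UNIV = 0" using inner_self[OF assms(1)] assms(2) by simp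
  then have "(cmod (f x))^2 = 0"
    by (intro nonneg_infsum_le_0D[where A=UNIV]) (use assms(1) in \<open>auto simp: l2_iff\<close>)
  then show "f x = 0" by simp
qed

lemma norm1_inner: "f \<in> l2 \<Longrightarrow> l2_norm f = 1 \<Longrightarrow> l2_inner f f = 1"
  by (simp add: inner_self l2_norm_def)

lemma unitaryD:
  assumes "unitary_l2 T"
  shows "\<And>f. f \<in> l2 \<Longrightarrow> T f \<in> l2"
    and "\<And>f g c. f \<in> l2 \<Longrightarrow> g \<in> l2 \<Longrightarrow> T (\<lambda>x. f x + c * g x) = (\<lambda>y. T f y + c * T g y)"
    and "\<And>f g. f \<in> l2 \<Longrightarrow> g \<in> l2 \<Longrightarrow> l2_inner (T f) (T g) = l2_inner f g"
    and "inj_on T l2" and "T ` l2 = l2" and "bij_betw T l2 l2"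
  using assms unfolding unitary_l2_def bij_betw_def by auto

lemma unitary_intro:
  assumes maps: "\<And>f. f \<in> l2 \<Longrightarrow> T f \<in> l2"
    and lin: "\<And>f g c. f \<in> l2 \<Longrightarrow> g \<in> l2 \<Longrightarrow> T (\<lambda>x. f x + c * g x) = (\<lambda>y. T f y + c * T g y)"
    and inner: "\<And>f g. f \<in> l2 \<Longrightarrow> g \<in> l2 \<Longrightarrow> l2_inner (T f) (T g) = l2_inner f g"
    and surj: "\<And>g. g \<in> l2 \<Longrightarrow> \<exists>f\<in>l2. T f = g"
  shows "unitary_l2 T"
proof -
  have "inj_on T l2"
  proof (rule inj_onI)
    fix f g assume f: "f \<in> l2" and g: "g \<in> l2" and eq: "T f = T g"
    define d where "d = (\<lambda>x. f x + (-1) * g x)"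
    have d: "d \<in> l2" unfolding d_def using f g by (rule l2_lin)
    have "T d = (\<lambda>y. T f y + (-1) * T g y)" unfolding d_def using lin f g by blast
    then have "T d = (\<lambda>y. 0)" using eq by simp
    then have "l2_inner d d = 0" using inner[OF d d] by (simp add: l2_inner_def)
    then have "d = (\<lambda>x. 0)" using d inner_self_eq0 by blast
    then show "f = g" unfolding d_def by (auto simp: fun_eq_iff)
  qed
  moreover have "T ` l2 = l2" using maps surj by blast
  ultimately show ?thesis unfolding unitary_l2_def bij_betw_def using lin inner by blast
qed

lemma unitary_zero: "unitary_l2 T \<Longrightarrow> T (\<lambda>x. 0) = (\<lambda>x. 0)"
  using unitaryD(2)[of T "\<lambda>x. 0" "\<lambda>x. 0" 1] l2_zero by (simp add: fun_eq_iff)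

lemma unitary_id: "unitary_l2 (\<lambda>f. f)"
  by (rule unitary_intro) auto

lemma unitary_comp:
  fixes S :: "('b \<Rightarrow> complex) \<Rightarrow> ('c \<Rightarrow> complex)" and T :: "('a \<Rightarrow> complex) \<Rightarrow> ('b \<Rightarrow> complex)"
  assumes S: "unitary_l2 S" and T: "unitary_l2 T"
  shows "unitary_l2 (\<lambda>f. S (T f))"
proof (rule unitary_intro)
  fix f g :: "'a \<Rightarrow> complex" and c assume f: "f \<in> l2" and g: "g \<in> l2"
  have "T (\<lambda>x. f x + c * g x) = (\<lambda>y. T f y + c * T g y)" by (rule unitaryD(2)[OF T f g])
  then show "S (T (\<lambda>x. f x + c * g x)) = (\<lambda>y. S (T f) y + c * S (T g) y)"
    using unitaryD(2)[OF S unitaryD(1)[OF T f] unitaryD(1)[OF T g]] by simp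
  show "l2_inner (S (T f)) (S (T g)) = l2_inner f g"
    using unitaryD(3)[OF S unitaryD(1)[OF T f] unitaryD(1)[OF T g]] unitaryD(3)[OF T f g] by simp
next
  fix f :: "'a \<Rightarrow> complex" assume "f \<in> l2" then show "S (T f) \<in> l2" using unitaryD(1)[OF S] unitaryD(1)[OF T] by simp
next
  fix g :: "'c \<Rightarrow> complex" assume "g \<in> l2"
  then have "g \<in> S ` l2" using unitaryD(5)[OF S] by simp
  then obtain h where h: "h \<in> l2" "g = S h" by (rule imageE)
  then have "h \<in> T ` l2" using unitaryD(5)[OF T] by simp
  then obtain f where f: "f \<in> l2" "h = T f" by (rule imageE)
  show "\<exists>f\<in>l2. S (T f) = g" using f h by (intro bexI[of _ f]) simp_all
qed

lemma unitary_inv: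
  fixes T :: "('a \<Rightarrow> complex) \<Rightarrow> ('b \<Rightarrow> complex)"
  assumes T: "unitary_l2 T"
  shows "unitary_l2 (inv_into l2 T)"
proof -
  have im: "T ` l2 = l2" and inj: "inj_on T l2" using unitaryD[OF T] by auto
  have m: "inv_into l2 T g \<in> l2" if "g \<in> l2" for g
    using inv_into_into[of g T l2] that im by simp
  have r: "T (inv_into l2 T g) = g" if "g \<in> l2" for g
    using f_inv_into_f[of g T l2] that im by simp
  show ?thesis
  proof (rule unitary_intro)
    fix f g :: "'b \<Rightarrow> complex" and c assume f: "f \<in> l2" and g: "g \<in> l2"
    have eq: "T (\<lambda>x. inv_into l2 T f x + c * inv_into l2 T g x) = (\<lambda>x. f x + c * g x)"
      using unitaryD(2)[OF T m[OF f] m[OF g], of c] r[OF f] r[OF g] by simp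
    have hm: "(\<lambda>x. inv_into l2 T f x + c * inv_into l2 T g x) \<in> l2"
      by (rule l2_lin[OF m[OF f] m[OF g]])
    show "inv_into l2 T (\<lambda>x. f x + c * g x) = (\<lambda>y. inv_into l2 T f y + c * inv_into l2 T g y)"
      using inv_into_f_f[OF inj hm] unfolding eq .
    show "l2_inner (inv_into l2 T f) (inv_into l2 T g) = l2_inner f g"
      using unitaryD(3)[OF T m[OF f] m[OF g]] r f g by simp
  next
    fix f :: "'b \<Rightarrow> complex" assume "f \<in> l2" then show "inv_into l2 T f \<in> l2" by (rule m)
  next
    fix g :: "'a \<Rightarrow> complex" assume g: "g \<in> l2"
    show "\<exists>f\<in>l2. inv_into l2 T f = g"
      using inv_into_f_f[OF inj g] unitaryD(1)[OF T g] by (intro bexI[of _ "T g"])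
  qed
qed

lemma unitary_funpow:
  fixes T :: "('a \<Rightarrow> complex) \<Rightarrow> ('a \<Rightarrow> complex)"
  shows "unitary_l2 T \<Longrightarrow> unitary_l2 (T ^^ n)"
proof (induction n)
  case 0
  have "T ^^ 0 = (\<lambda>f::'a \<Rightarrow> complex. f)" by (simp add: fun_eq_iff)
  show ?case unfolding \<open>T ^^ 0 = (\<lambda>f::'a \<Rightarrow> complex. f)\<close> by (rule unitary_id)
next
  case (Suc n)
  then show ?case using unitary_comp[of T "T ^^ n"] by (simp add: comp_def)
qed

lemma unitary_upow: "unitary_l2 T \<Longrightarrow> unitary_l2 (upow T k)"
  unfolding upow_def by (auto intro: unitary_funpow unitary_inv)

lemma unitary_perm:
  fixes h :: "'b \<Rightarrow> 'a"
  assumes h: "bij h"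
  shows "unitary_l2 (\<lambda>f x. f (h x))"
proof (rule unitary_intro)
  fix f :: "'a \<Rightarrow> complex" assume "f \<in> l2"
  then show "(\<lambda>x. f (h x)) \<in> l2"
    unfolding l2_iff using summable_on_reindex_bij_betw[OF h, of "\<lambda>x. (cmod (f x))^2"] by simp
next
  fix f g :: "'a \<Rightarrow> complex"
  show "l2_inner (\<lambda>x. f (h x)) (\<lambda>x. g (h x)) = l2_inner f g"
    unfolding l2_inner_def using infsum_reindex_bij_betw[OF h, of "\<lambda>x. cnj (f x) * g x"] by simp
next
  fix g :: "'b \<Rightarrow> complex" assume g: "g \<in> l2"
  have hi: "bij (inv h)" using h by (simp add: bij_imp_bij_inv)
  have "(\<lambda>x. g (inv h x)) \<in> l2"
    using g unfolding l2_iff using summable_on_reindex_bij_betw[OF hi, of "\<lambda>x. (cmod (g x))^2"] by simp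
  moreover have "(\<lambda>x. g (inv h (h x))) = g" using h by (simp add: bij_def)
  ultimately show "\<exists>f\<in>l2. (\<lambda>x. f (h x)) = g" by (intro bexI[of _ "\<lambda>x. g (inv h x)"])
qed simp

lemma unitary_scalar:
  assumes c: "cmod c = 1"
  shows "unitary_l2 (\<lambda>f x. c * f x)"
proof (rule unitary_intro)
  fix f g :: "'a \<Rightarrow> complex" assume f: "f \<in> l2" and g: "g \<in> l2"
  have cc: "cnj c * c = 1" using c by (metis complex_norm_square mult.commute of_real_1 power_one)
  have e: "cnj (c * f x) * (c * g x) = cnj (f x) * g x" for x
  proof -
    have "cnj (c * f x) * (c * g x) = (cnj c * c) * (cnj (f x) * g x)" by (simp add: algebra_simps)
    then show ?thesis using cc by simp
  qed
  show "l2_inner (\<lambda>x. c * f x) (\<lambda>x. c * g x) = l2_inner f g" unfolding l2_inner_def e ..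
next
  fix g :: "'a \<Rightarrow> complex" assume g: "g \<in> l2"
  have "c \<noteq> 0" using c by auto
  then have "(\<lambda>x. c * (inverse c * g x)) = g" by (simp add: fun_eq_iff mult.assoc[symmetric])
  then show "\<exists>f\<in>l2. (\<lambda>x. c * f x) = g" using l2_scale[OF g, of "inverse c"] by (intro bexI[of _ "\<lambda>x. inverse c * g x"])
qed (auto intro: l2_scale simp: algebra_simps)

lemma inner_scale_left: "l2_inner (\<lambda>x. c * f x) g = cnj c * l2_inner f g"
  unfolding l2_inner_def by (simp add: infsum_cmult_right'[symmetric] mult.assoc)

lemma inner_scale_right: "l2_inner f (\<lambda>x. c * g x) = c * l2_inner f g"
  unfolding l2_inner_def by (simp add: infsum_cmult_right'[symmetric] algebra_simps)

lemma inner_self_real: "cnj (l2_inner w w) = l2_inner w w"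
  using inner_cnj[of w w] by simp

lemma unitary_refl:
  fixes w :: "'a \<Rightarrow> complex"
  assumes w: "w \<in> l2" and a0: "l2_inner w w \<noteq> 0"
  defines "R \<equiv> (\<lambda>f x. f x + (- (2 / l2_inner w w * l2_inner w f)) * w x)"
  shows "unitary_l2 R" and "\<And>f. f \<in> l2 \<Longrightarrow> R (R f) = f"
proof -
  define a where "a = l2_inner w w"
  have ca: "cnj a = a" unfolding a_def by (rule inner_self_real)
  have a0': "a \<noteq> 0" using a0 a_def by simp
  have Rm: "R f \<in> l2" if "f \<in> l2" for f :: "'a \<Rightarrow> complex" unfolding R_def using l2_lin[OF that w] .
  have Req: "R f = (\<lambda>x. f x + (- (2 / a * l2_inner w f)) * w x)" for f :: "'a \<Rightarrow> complex"
    unfolding R_def a_def by (rule refl)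
  have kR: "l2_inner w (R f) = - l2_inner w f" if f: "f \<in> l2" for f :: "'a \<Rightarrow> complex"
  proof -
    have "l2_inner w (R f) = l2_inner w f + (- (2 / a * l2_inner w f)) * a"
      unfolding Req a_def by (rule inner_lin_right[OF w f w])
    also have "\<dots> = - l2_inner w f" using a0' by (simp add: field_simps)
    finally show ?thesis .
  qed
  show RR: "R (R f) = f" if f: "f \<in> l2" for f :: "'a \<Rightarrow> complex"
  proof -
    have "R (R f) = (\<lambda>x. R f x + (- (2 / a * (- l2_inner w f))) * w x)"
      unfolding Req[of "R f"] kR[OF f] ..
    also have "\<dots> = f" unfolding Req by (simp add: algebra_simps)
    finally show ?thesis .
  qed
  show "unitary_l2 R"
  proof (rule unitary_intro)
    fix f :: "'a \<Rightarrow> complex" assume "f \<in> l2" then show "R f \<in> l2" by (rule Rm)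
  next
    fix f g :: "'a \<Rightarrow> complex" and c assume f: "f \<in> l2" and g: "g \<in> l2"
    have "l2_inner w (\<lambda>x. f x + c * g x) = l2_inner w f + c * l2_inner w g"
      by (rule inner_lin_right[OF w f g])
    then show "R (\<lambda>x. f x + c * g x) = (\<lambda>y. R f y + c * R g y)"
      unfolding Req by (simp add: algebra_simps fun_eq_iff)
  next
    fix f g :: "'a \<Rightarrow> complex" assume f: "f \<in> l2" and g: "g \<in> l2"
    define kf where "kf = - (2 / a * l2_inner w f)"
    define kg where "kg = - (2 / a * l2_inner w g)"
    have Rf: "R f = (\<lambda>x. f x + kf * w x)" unfolding Req kf_def ..
    have Rg: "R g = (\<lambda>x. g x + kg * w x)" unfolding Req kg_def ..
    have Rfm: "(\<lambda>x. f x + kf * w x) \<in> l2" using l2_lin[OF f w] .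
    have "l2_inner (R f) (R g) = l2_inner f (R g) + cnj kf * l2_inner w (R g)"
      unfolding Rf by (rule inner_lin_left[OF Rm[OF g] f w])
    also have "\<dots> = (l2_inner f g + kg * l2_inner f w) + cnj kf * (l2_inner w g + kg * a)"
      unfolding Rg a_def using inner_lin_right[OF f g w] inner_lin_right[OF w g w] by simp
    also have "cnj kf = - (2 / a * l2_inner f w)"
      unfolding kf_def using ca inner_cnj[of f w] by simp
    also have "(l2_inner f g + kg * l2_inner f w) + - (2 / a * l2_inner f w) * (l2_inner w g + kg * a) = l2_inner f g"
      unfolding kg_def using a0' by (simp add: field_simps)
    finally show "l2_inner (R f) (R g) = l2_inner f g" .
  next
    fix g :: "'a \<Rightarrow> complex" assume g: "g \<in> l2"
    then show "\<exists>f\<in>l2. R f = g" using Rm[OF g] RR[OF g] by blast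
  qed
qed

lemma exists_unitary_map:
  fixes u v :: "'a \<Rightarrow> complex"
  assumes u: "u \<in> l2" and v: "v \<in> l2" and uu: "l2_inner u u = 1" and vv: "l2_inner v v = 1"
  shows "\<exists>R. unitary_l2 R \<and> R u = v"
proof -
  define c where "c = l2_inner u v"
  define lam where "lam = (if c = 0 then 1 else c / of_real (cmod c))"
  have lam1: "cmod lam = 1" unfolding lam_def by (simp add: norm_divide)
  have lamc: "cnj lam * c = of_real (cmod c)"
  proof (cases "c = 0")
    case False
    have "cnj c * c = of_real ((cmod c)^2)" using complex_norm_square[of c] by (simp add: mult.commute)
    then show ?thesis using False unfolding lam_def by (simp add: power2_eq_square field_simps)
  qed (simp add: lam_def)
  define u' where "u' = (\<lambda>x. lam * u x)"
  have u': "u' \<in> l2" unfolding u'_def using l2_scale[OF u] .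
  have S: "unitary_l2 (\<lambda>f x. lam * f x)" by (rule unitary_scalar[OF lam1])
  have u'u': "l2_inner u' u' = 1" unfolding u'_def using unitaryD(3)[OF S u u] uu by simp
  define r where "r = l2_inner u' v"
  have r: "r = of_real (cmod c)" unfolding r_def u'_def inner_scale_left c_def[symmetric] by (rule lamc)
  have vu': "l2_inner v u' = r" using inner_cnj[of v u'] r r_def by simp
  define w where "w = (\<lambda>x. u' x + (-1) * v x)"
  have w: "w \<in> l2" unfolding w_def using l2_lin[OF u' v] .
  have ww: "l2_inner w w = 2 - 2 * r"
  proof -
    have "l2_inner w w = l2_inner u' w + cnj (-1) * l2_inner v w"
      using inner_lin_left[OF w u' v, of "-1"] by (simp only: w_def[symmetric])
    also have "l2_inner u' w = 1 - r" unfolding w_def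
      using inner_lin_right[OF u' u' v, of "-1"] u'u' r_def by simp
    also have "l2_inner v w = r - 1" unfolding w_def
      using inner_lin_right[OF v u' v, of "-1"] vu' vv by simp
    finally show ?thesis by simp
  qed
  have wu': "l2_inner w u' = 1 - r"
    unfolding w_def using inner_lin_left[OF u' u' v, of "-1"] u'u' vu' by simp
  show ?thesis
  proof (cases "l2_inner w w = 0")
    case True
    then have "w = (\<lambda>x. 0)" using inner_self_eq0[OF w] by simp
    then have "u' = v" unfolding w_def by (auto simp: fun_eq_iff)
    then show ?thesis using S unfolding u'_def by blast
  next
    case False
    define R where "R = (\<lambda>f x. f x + (- (2 / l2_inner w w * l2_inner w f)) * w x)"
    have UR: "unitary_l2 R" unfolding R_def using unitary_refl(1)[OF w False] .
    have "2 / l2_inner w w * l2_inner w u' = 1"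
      using False unfolding ww wu' by (simp add: field_simps)
    then have "R u' = v" unfolding R_def w_def by (simp add: fun_eq_iff)
    have "unitary_l2 (\<lambda>f. R (\<lambda>x. lam * f x))" by (rule unitary_comp[OF UR S])
    moreover have "(\<lambda>f. R (\<lambda>x. lam * f x)) u = v" using \<open>R u' = v\<close> unfolding u'_def by simp
    ultimately show ?thesis by blast
  qed
qed

definition layer :: "(int \<Rightarrow> ('a \<Rightarrow> complex) \<Rightarrow> ('b \<Rightarrow> complex)) \<Rightarrow> (int \<times> 'a \<Rightarrow> complex) \<Rightarrow> (int \<times> 'b \<Rightarrow> complex)" where
  "layer W F = (\<lambda>(t, a). W t (\<lambda>b. F (t, b)) a)"

lemma layer_slice: "(\<lambda>b. layer W F (t, b)) = W t (\<lambda>b. F (t, b))"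
  by (simp add: layer_def)

lemma l2_prod_iff:
  fixes F :: "'i \<times> 'a \<Rightarrow> complex"
  shows "F \<in> l2 \<longleftrightarrow> (\<forall>t. (\<lambda>b. F (t, b)) \<in> l2) \<and>
     (\<lambda>t. infsum (\<lambda>b. (cmod (F (t, b)))^2) UNIV) summable_on UNIV"
proof
  assume F: "F \<in> l2"
  have s: "(\<lambda>(t, b). (cmod (F (t, b)))^2) summable_on Sigma UNIV (\<lambda>_. UNIV)"
  proof -
    have "(\<lambda>(t, b). (cmod (F (t, b)))^2) = (\<lambda>p. (cmod (F p))^2)" by auto
    then show ?thesis using F by (simp add: l2_iff)
  qed
  show "(\<forall>t. (\<lambda>b. F (t, b)) \<in> l2) \<and> (\<lambda>t. infsum (\<lambda>b. (cmod (F (t, b)))^2) UNIV) summable_on UNIV"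
    using summable_on_SigmaD1[OF s] summable_on_Sigma_banach[OF s] by (simp add: l2_iff)
next
  assume H: "(\<forall>t. (\<lambda>b. F (t, b)) \<in> l2) \<and> (\<lambda>t. infsum (\<lambda>b. (cmod (F (t, b)))^2) UNIV) summable_on UNIV"
  have "(\<lambda>p. (cmod (F p))^2) summable_on Sigma UNIV (\<lambda>_. UNIV)"
  proof (rule summable_on_SigmaI[where g = "\<lambda>t. infsum (\<lambda>b. (cmod (F (t, b)))^2) UNIV"])
    fix t :: 'i
    show "((\<lambda>b. (cmod (F (t, b)))^2) has_sum infsum (\<lambda>b. (cmod (F (t, b)))^2) UNIV) UNIV"
      using H by (simp add: l2_iff)
  qed (use H in auto)
  then show "F \<in> l2" by (simp add: l2_iff)
qed

lemma l2_prod_inner: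
  fixes F G :: "'i \<times> 'a \<Rightarrow> complex"
  assumes "F \<in> l2" "G \<in> l2"
  shows "l2_inner F G = infsum (\<lambda>t. l2_inner (\<lambda>b. F (t, b)) (\<lambda>b. G (t, b))) UNIV"
proof -
  have s: "(\<lambda>(t, b). cnj (F (t, b)) * G (t, b)) summable_on Sigma UNIV (\<lambda>_. UNIV)"
  proof -
    have "(\<lambda>(t, b). cnj (F (t, b)) * G (t, b)) = (\<lambda>p. cnj (F p) * G p)" by auto
    then show ?thesis using l2_inner_summable[OF assms] by simp
  qed
  show ?thesis
  proof -
    have "(\<lambda>(t, b). cnj (F (t, b)) * G (t, b)) = (\<lambda>p. cnj (F p) * G p)" by auto
    then show ?thesis unfolding l2_inner_def using infsum_Sigma'_banach[OF s] by simp
  qed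
qed

lemma l2_slice:
  fixes F :: "'i \<times> 'a \<Rightarrow> complex"
  assumes "F \<in> l2" shows "(\<lambda>b. F (t, b)) \<in> l2"
  using iffD1[OF l2_prod_iff[of F] assms] by blast

lemma unitary_normsq:
  assumes "unitary_l2 T" "f \<in> l2"
  shows "infsum (\<lambda>x. (cmod (T f x))^2) UNIV = infsum (\<lambda>x. (cmod (f x))^2) UNIV"
  using unitaryD(3)[OF assms(1) assms(2) assms(2)] inner_self[OF assms(2)]
    inner_self[OF unitaryD(1)[OF assms]] by simp

lemma layer_maps:
  assumes W: "\<And>t. unitary_l2 (W t)" and F: "F \<in> l2"
  shows "layer W F \<in> l2"
proof -
  have Ft: "(\<lambda>b. F (t, b)) \<in> l2" for t using F by (rule l2_slice)
  have eq: "infsum (\<lambda>b. (cmod (layer W F (t, b)))^2) UNIV = infsum (\<lambda>b. (cmod (F (t, b)))^2) UNIV" for t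
    using unitary_normsq[OF W Ft, of t] by (simp add: layer_def)
  have s: "(\<lambda>t. infsum (\<lambda>b. (cmod (F (t, b)))^2) UNIV) summable_on UNIV"
    using iffD1[OF l2_prod_iff[of F] F] by blast
  show ?thesis
  proof (rule iffD2[OF l2_prod_iff], intro conjI allI)
    fix t show "(\<lambda>b. layer W F (t, b)) \<in> l2" unfolding layer_slice using unitaryD(1)[OF W Ft] .
  next
    show "(\<lambda>t. infsum (\<lambda>b. (cmod (layer W F (t, b)))^2) UNIV) summable_on UNIV"
      unfolding eq by (rule s)
  qed
qed

lemma unitary_layer:
  fixes W :: "int \<Rightarrow> ('a \<Rightarrow> complex) \<Rightarrow> ('b \<Rightarrow> complex)"
  assumes W: "\<And>t. unitary_l2 (W t)"
  shows "unitary_l2 (layer W)"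
proof (rule unitary_intro)
  fix F :: "int \<times> 'a \<Rightarrow> complex" assume "F \<in> l2" then show "layer W F \<in> l2" by (rule layer_maps[OF W])
next
  fix F G :: "int \<times> 'a \<Rightarrow> complex" and c
  assume F: "F \<in> l2" and G: "G \<in> l2"
  have Ft: "(\<lambda>b. F (t, b)) \<in> l2" for t using F by (rule l2_slice)
  have Gt: "(\<lambda>b. G (t, b)) \<in> l2" for t using G by (rule l2_slice)
  show "layer W (\<lambda>x. F x + c * G x) = (\<lambda>y. layer W F y + c * layer W G y)"
  proof
    fix p :: "int \<times> 'b"
    obtain t a where p: "p = (t, a)" by (cases p)
    show "layer W (\<lambda>x. F x + c * G x) p = layer W F p + c * layer W G p"
      unfolding p layer_def using unitaryD(2)[OF W[of t] Ft[of t] Gt[of t], of c] by (simp add: fun_eq_iff)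
  qed
  have "l2_inner (layer W F) (layer W G) = infsum (\<lambda>t. l2_inner (W t (\<lambda>b. F (t, b))) (W t (\<lambda>b. G (t, b)))) UNIV"
    using l2_prod_inner[OF layer_maps[OF W F] layer_maps[OF W G]] by (simp add: layer_slice)
  also have "\<dots> = infsum (\<lambda>t. l2_inner (\<lambda>b. F (t, b)) (\<lambda>b. G (t, b))) UNIV"
    using unitaryD(3)[OF W Ft Gt] by presburger
  also have "\<dots> = l2_inner F G" using l2_prod_inner[OF F G] by simp
  finally show "l2_inner (layer W F) (layer W G) = l2_inner F G" .
next
  fix G :: "int \<times> 'b \<Rightarrow> complex" assume G: "G \<in> l2"
  have Gt: "(\<lambda>b. G (t, b)) \<in> l2" for t using G by (rule l2_slice)
  define F where "F = layer (\<lambda>t. inv_into l2 (W t)) G"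
  have F: "F \<in> l2" unfolding F_def by (rule layer_maps[OF unitary_inv[OF W] G])
  have "layer W F = G"
  proof
    fix p :: "int \<times> 'b"
    obtain t a where p: "p = (t, a)" by (cases p)
    have "W t (inv_into l2 (W t) (\<lambda>b. G (t, b))) = (\<lambda>b. G (t, b))"
      using f_inv_into_f[of "\<lambda>b. G (t, b)" "W t" l2] unitaryD(5)[OF W] Gt by simp
    then show "layer W F p = G p"
      unfolding p F_def layer_def by (simp add: fun_eq_iff)
  qed
  then show "\<exists>F\<in>l2. layer W F = G" using F by blast
qed

lemma upow_pos: "upow T (int n) = T ^^ n"
  by (simp add: upow_def)

lemma upow_neg: "upow T (- int n) = inv_into l2 T ^^ n"
  by (cases "n = 0") (simp_all add: upow_def)

lemma upow_zero: "upow T 0 = (\<lambda>f. f)"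
  by (simp add: upow_def id_def)

lemma unitary_endo_inv:
  fixes T :: "('a \<Rightarrow> complex) \<Rightarrow> ('a \<Rightarrow> complex)"
  assumes T: "unitary_l2 T" and x: "x \<in> l2"
  shows "T (inv_into l2 T x) = x" and "inv_into l2 T (T x) = x" and "inv_into l2 T x \<in> l2"
  using f_inv_into_f[of x T l2] inv_into_f_f[OF unitaryD(4)[OF T] x] inv_into_into[of x T l2]
    unitaryD(5)[OF T] x by simp_all

lemma invpow_l2:
  fixes T :: "('a \<Rightarrow> complex) \<Rightarrow> ('a \<Rightarrow> complex)"
  assumes T: "unitary_l2 T" and f: "f \<in> l2"
  shows "(inv_into l2 T ^^ m) f \<in> l2"
  using unitaryD(1)[OF unitary_funpow[OF unitary_inv[OF T]] f] .

lemma upow_succ: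
  fixes T :: "('a \<Rightarrow> complex) \<Rightarrow> ('a \<Rightarrow> complex)"
  assumes T: "unitary_l2 T" and f: "f \<in> l2"
  shows "upow T (k + 1) f = T (upow T k f)"
proof (cases k)
  case (nonneg n)
  have e: "k + 1 = int (Suc n)" using nonneg by simp
  have "upow T (k + 1) f = upow T (int (Suc n)) f" by (simp only: e)
  also have "\<dots> = (T ^^ Suc n) f" by (simp only: upow_pos)
  also have "\<dots> = T ((T ^^ n) f)" by simp
  also have "\<dots> = T (upow T k f)" by (simp only: nonneg upow_pos)
  finally show ?thesis .
next
  case (neg n)
  have "k + 1 = - int n" using neg by simp
  then have "upow T (k + 1) f = (inv_into l2 T ^^ n) f" by (simp add: upow_neg)
  also have "\<dots> = T (inv_into l2 T ((inv_into l2 T ^^ n) f))"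
    using unitary_endo_inv(1)[OF T invpow_l2[OF T f, of n]] by simp
  also have "\<dots> = T (upow T k f)" unfolding neg upow_neg by simp
  finally show ?thesis .
qed

lemma upow_comm:
  fixes T :: "('a \<Rightarrow> complex) \<Rightarrow> ('a \<Rightarrow> complex)"
  assumes T: "unitary_l2 T" and f: "f \<in> l2"
  shows "upow T k (T f) = T (upow T k f)"
proof (cases k)
  case (nonneg n)
  then show ?thesis by (simp add: upow_pos funpow_swap1)
next
  case (neg n)
  have "(inv_into l2 T ^^ m) (T f) = T ((inv_into l2 T ^^ m) f)" for m
  proof (induction m)
    case 0 then show ?case by simp
  next
    case (Suc m)
    have "(inv_into l2 T ^^ Suc m) (T f) = inv_into l2 T (T ((inv_into l2 T ^^ m) f))"
      using Suc by simp
    also have "\<dots> = (inv_into l2 T ^^ m) f"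
      using unitary_endo_inv(2)[OF T invpow_l2[OF T f, of m]] .
    also have "\<dots> = T (inv_into l2 T ((inv_into l2 T ^^ m) f))"
      using unitary_endo_inv(1)[OF T invpow_l2[OF T f, of m]] by simp
    finally show ?case by simp
  qed
  then show ?thesis unfolding neg upow_neg by blast
qed

lemma upow_intertwine:
  fixes S :: "('a \<Rightarrow> complex) \<Rightarrow> ('b \<Rightarrow> complex)"
    and U :: "('a \<Rightarrow> complex) \<Rightarrow> ('a \<Rightarrow> complex)"
    and U' :: "('b \<Rightarrow> complex) \<Rightarrow> ('b \<Rightarrow> complex)"
  assumes S: "unitary_l2 S" and U: "unitary_l2 U" and U': "unitary_l2 U'"
    and comm: "\<And>F. F \<in> l2 \<Longrightarrow> S (U F) = U' (S F)"
    and F: "F \<in> l2"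
  shows "S (upow U k F) = upow U' k (S F)"
proof (cases k)
  case (nonneg n)
  have "S ((U ^^ n) F) = (U' ^^ n) (S F)"
  proof (induction n)
    case (Suc n)
    have "(U ^^ n) F \<in> l2" using unitaryD(1)[OF unitary_funpow[OF U] F] .
    then show ?case using Suc comm by simp
  qed simp
  then show ?thesis unfolding nonneg upow_pos .
next
  case (neg n)
  have ci: "S (inv_into l2 U x) = inv_into l2 U' (S x)" if x: "x \<in> l2" for x
  proof -
    have m: "S (inv_into l2 U x) \<in> l2" using unitaryD(1)[OF S unitary_endo_inv(3)[OF U x]] .
    have "U' (S (inv_into l2 U x)) = S x"
      using comm[OF unitary_endo_inv(3)[OF U x]] unitary_endo_inv(1)[OF U x] by simp
    then show ?thesis using unitary_endo_inv(2)[OF U' m] by simp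
  qed
  have "S ((inv_into l2 U ^^ m) F) = (inv_into l2 U' ^^ m) (S F)" for m
  proof (induction m)
    case (Suc m)
    then show ?case using ci[OF invpow_l2[OF U F, of m]] by simp
  qed simp
  then show ?thesis unfolding neg upow_neg .
qed

lemma shift_tensor_layer:
  "shift_tensor Ur = (\<lambda>F. layer (\<lambda>_. Ur) (\<lambda>p. F ((\<lambda>(t, b). (t - 1, b)) p)))"
  by (auto simp: fun_eq_iff shift_tensor_def layer_def)

lemma unitary_shift_tensor:
  fixes Ur :: "('a \<Rightarrow> complex) \<Rightarrow> ('a \<Rightarrow> complex)"
  assumes "unitary_l2 Ur"
  shows "unitary_l2 (shift_tensor Ur)"
proof -
  have b: "bij (\<lambda>(t::int, b::'a). (t - 1, b))"
    by (rule bij_betw_byWitness[where f' = "\<lambda>(t, b). (t + 1, b)"]) auto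
  show ?thesis unfolding shift_tensor_layer
    by (rule unitary_comp[OF unitary_layer[OF assms] unitary_perm[OF b]])
qed

lemma clock_ket_l2:
  assumes "psi \<in> l2" shows "clock_ket t psi \<in> l2"
proof (rule iffD2[OF l2_prod_iff], intro conjI allI)
  fix s
  show "(\<lambda>b. clock_ket t psi (s, b)) \<in> l2"
    using assms l2_zero by (cases "s = t") (simp_all add: clock_ket_def)
next
  let ?g = "\<lambda>s. infsum (\<lambda>b. (cmod (clock_ket t psi (s, b)))^2) UNIV"
  have "?g summable_on {t}" by simp
  moreover have "?g s = 0" if "s \<noteq> t" for s using that by (simp add: clock_ket_def)
  ultimately show "?g summable_on UNIV"
    using summable_on_cong_neutral[of UNIV "{t}" ?g ?g] by auto
qed

theorem theorem3:
  fixes Ur :: "('a::countable \<Rightarrow> complex) \<Rightarrow> ('a \<Rightarrow> complex)"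
    and Ur' :: "('b::countable \<Rightarrow> complex) \<Rightarrow> ('b \<Rightarrow> complex)"
    and psi0 :: "'a \<Rightarrow> complex" and psi0' :: "'b \<Rightarrow> complex"
  assumes dim_eq: "\<exists>g :: 'a \<Rightarrow> 'b. bij g"
    and Ur: "unitary_l2 Ur" and Ur': "unitary_l2 Ur'"
    and psi0: "psi0 \<in> l2" "l2_norm psi0 = 1"
    and psi0': "psi0' \<in> l2" "l2_norm psi0' = 1"
  shows "\<exists>S :: (int \<times> 'a \<Rightarrow> complex) \<Rightarrow> (int \<times> 'b \<Rightarrow> complex).
           unitary_l2 S \<and>
           (\<forall>t::int. upow (shift_tensor Ur') t (clock_ket 0 psi0')
                    = S (upow (shift_tensor Ur) t (clock_ket 0 psi0))) \<and>
           (\<forall>G \<in> l2. shift_tensor Ur' G = S (shift_tensor Ur (inv_into l2 S G)))"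
proof -
  obtain g :: "'a \<Rightarrow> 'b" where g: "bij g" using dim_eq by blast
  have hi: "bij (inv g)" using g by (rule bij_imp_bij_inv)
  define P where "P = (\<lambda>(f::'a \<Rightarrow> complex) x. f (inv g x))"
  have UP: "unitary_l2 P" unfolding P_def by (rule unitary_perm[OF hi])
  have u: "P psi0 \<in> l2" using unitaryD(1)[OF UP psi0(1)] .
  have uu: "l2_inner (P psi0) (P psi0) = 1"
    using unitaryD(3)[OF UP psi0(1) psi0(1)] norm1_inner[OF psi0] by simp
  have vv: "l2_inner psi0' psi0' = 1" using norm1_inner[OF psi0'] .
  obtain R where R: "unitary_l2 R" "R (P psi0) = psi0'"
    using exists_unitary_map[OF u psi0'(1) uu vv] by blast
  define V where "V = (\<lambda>f. R (P f))"
  have UV: "unitary_l2 V" unfolding V_def by (rule unitary_comp[OF R(1) UP])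
  have Vpsi: "V psi0 = psi0'" unfolding V_def using R(2) .
  define W where "W = (\<lambda>t f. upow Ur' t (V (upow Ur (- t) f)))"
  have UW: "unitary_l2 (W t)" for t
    unfolding W_def by (rule unitary_comp[OF unitary_upow[OF Ur'] unitary_comp[OF UV unitary_upow[OF Ur]]])
  define S where "S = layer W"
  have US: "unitary_l2 S" unfolding S_def by (rule unitary_layer[OF UW])
  have UU: "unitary_l2 (shift_tensor Ur)" by (rule unitary_shift_tensor[OF Ur])
  have UU': "unitary_l2 (shift_tensor Ur')" by (rule unitary_shift_tensor[OF Ur'])
  have Wcomm: "W t (Ur f) = Ur' (W (t - 1) f)" if f: "f \<in> l2" for t f
  proof -
    have m1: "upow Ur (- t) f \<in> l2" using unitaryD(1)[OF unitary_upow[OF Ur] f] .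
    have "upow Ur (- t) (Ur f) = Ur (upow Ur (- t) f)" by (rule upow_comm[OF Ur f])
    also have "\<dots> = upow Ur (- t + 1) f" by (rule upow_succ[OF Ur f, symmetric])
    also have "- t + 1 = - (t - 1)" by simp
    finally have e1: "upow Ur (- t) (Ur f) = upow Ur (- (t - 1)) f" .
    have m2: "V (upow Ur (- (t - 1)) f) \<in> l2"
      using unitaryD(1)[OF UV unitaryD(1)[OF unitary_upow[OF Ur] f]] .
    have "upow Ur' t (V (upow Ur (- (t - 1)) f)) = upow Ur' ((t - 1) + 1) (V (upow Ur (- (t - 1)) f))"
      by simp
    also have "\<dots> = Ur' (upow Ur' (t - 1) (V (upow Ur (- (t - 1)) f)))"
      by (rule upow_succ[OF Ur' m2])
    finally show ?thesis unfolding W_def e1 .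
  qed
  have comm: "S (shift_tensor Ur F) = shift_tensor Ur' (S F)" if F: "F \<in> l2" for F
  proof
    fix p :: "int \<times> 'b"
    obtain t a where p: "p = (t, a)" by (cases p)
    have sl: "(\<lambda>b. shift_tensor Ur F (t, b)) = Ur (\<lambda>b. F (t - 1, b))"
      by (simp add: shift_tensor_def)
    have "S (shift_tensor Ur F) p = W t (Ur (\<lambda>b. F (t - 1, b))) a"
      unfolding p S_def layer_def by (simp add: sl)
    also have "\<dots> = Ur' (W (t - 1) (\<lambda>b. F (t - 1, b))) a"
      using Wcomm[OF l2_slice[OF F, of "t - 1"]] by simp
    also have "\<dots> = shift_tensor Ur' (S F) p"
      unfolding p S_def shift_tensor_def by (simp add: layer_slice)
    finally show "S (shift_tensor Ur F) p = shift_tensor Ur' (S F) p" .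
  qed
  have S0: "S (clock_ket 0 psi0) = clock_ket 0 psi0'"
  proof
    fix p :: "int \<times> 'b"
    obtain t a where p: "p = (t, a)" by (cases p)
    show "S (clock_ket 0 psi0) p = clock_ket 0 psi0' p"
    proof (cases "t = 0")
      case True
      have "(\<lambda>b. clock_ket 0 psi0 (t, b)) = psi0" using True by (simp add: clock_ket_def)
      moreover have "W 0 psi0 = psi0'" unfolding W_def using Vpsi by (simp add: upow_zero)
      ultimately show ?thesis unfolding p S_def layer_def using True by (simp add: clock_ket_def)
    next
      case False
      have "(\<lambda>b. clock_ket 0 psi0 (t, b)) = (\<lambda>b. 0)" using False by (simp add: clock_ket_def)
      moreover have "W t (\<lambda>b. 0) = (\<lambda>b. 0)" by (rule unitary_zero[OF UW])
      ultimately show ?thesis unfolding p S_def layer_def using False by (simp add: clock_ket_def)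
    qed
  qed
  have part2: "\<forall>t::int. upow (shift_tensor Ur') t (clock_ket 0 psi0')
                    = S (upow (shift_tensor Ur) t (clock_ket 0 psi0))"
    using upow_intertwine[OF US UU UU' comm clock_ket_l2[OF psi0(1)]] S0 by simp
  have part3: "\<forall>G \<in> l2. shift_tensor Ur' G = S (shift_tensor Ur (inv_into l2 S G))"
  proof
    fix G :: "int \<times> 'b \<Rightarrow> complex" assume G: "G \<in> l2"
    have H: "inv_into l2 S G \<in> l2" and SH: "S (inv_into l2 S G) = G"
      using inv_into_into[of G S l2] f_inv_into_f[of G S l2] unitaryD(5)[OF US] G by simp_all
    show "shift_tensor Ur' G = S (shift_tensor Ur (inv_into l2 S G))"
      using comm[OF H] SH by simp
  qed
  show ?thesis using US part2 part3 by blast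
qed

end
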